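(* For $p_1,\dots,p_n\in[0,1]$, the tuple $(B_{p_1},\dots,B_{p_n})$ is jointly mixable if and only if $\sum_{i=1}^n p_i$ is an integer.
   Context: Work on an atomless probability space. $B_p$ denotes the Bernoulli distribution with mean $p$. An $n$-tuple of cdfs $\mathbf F=(F_1,\dots,F_n)$ is jointly mixable if the set $\{\text{cdf of }X_1+\dots+X_n:X_i\sim F_i\}$ contains a point mass $\delta_x$ for some $x\in\mathbb{R}$ (equivalently, there exist $X_i\sim F_i$ with $X_1+\dots+X_n$ almost surely constant). *)

theory Defs
  imports "HOL-Probability.Probability"
begin

definition atomless :: "'a measure \<Rightarrow> bool" where
  "atomless M \<longleftrightarrow> (\<forall>A\<in>sets M. 0 < emeasure M A \<longrightarrow>
     (\<exists>B\<in>sets M. B \<subseteq> A \<and> 0 < emeasure M B \<and> emeasure M B < emeasure M A))"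

definition bernoulli_measure :: "real \<Rightarrow> real measure" where
  "bernoulli_measure p = distr (measure_pmf (bernoulli_pmf p)) borel (\<lambda>b. of_bool b)"

definition jointly_mixable :: "'a measure \<Rightarrow> (nat \<Rightarrow> real measure) \<Rightarrow> nat \<Rightarrow> bool" where
  "jointly_mixable M F n \<longleftrightarrow>
     (\<exists>X :: nat \<Rightarrow> 'a \<Rightarrow> real.
        (\<forall>i<n. X i \<in> borel_measurable M \<and> distr M borel (X i) = F i) \<and>
        (\<exists>c. AE \<omega> in M. (\<Sum>i<n. X i \<omega>) = c))"

end

theory Submission
  imports Defs "HOL-Probability.Probability"
begin

lemma atomless_real:
  assumes "prob_space M" "atomless M" "A \<in> sets M" "0 < measure M A"
  shows "\<exists>B\<in>sets M. B \<subseteq> A \<and> 0 < measure M B \<and> measure M B < measure M A"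
proof -
  interpret prob_space M by fact
  have "0 < emeasure M A" using assms(3,4) by (simp add: emeasure_eq_measure)
  then obtain B where "B \<in> sets M" "B \<subseteq> A" "0 < emeasure M B" "emeasure M B < emeasure M A"
    using assms(2,3) unfolding atomless_def by blast
  then show ?thesis using assms(3) by (intro bexI[of _ B]) (auto simp: emeasure_eq_measure ennreal_less_iff)
qed

lemma atomless_small:
  assumes "prob_space M" "atomless M"
  shows "A \<in> sets M \<Longrightarrow> 0 < measure M A \<Longrightarrow>
     \<exists>B\<in>sets M. B \<subseteq> A \<and> 0 < measure M B \<and> measure M B \<le> measure M A / 2^k"
proof (induction k)
  case 0
  then show ?case by auto
next
  case (Suc k)
  interpret prob_space M by fact
  obtain B where B: "B\<in>sets M" "B \<subseteq> A" "0 < measure M B" "measure M B \<le> measure M A / 2^k"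
    using Suc by blast
  obtain C where C: "C\<in>sets M" "C \<subseteq> B" "0 < measure M C" "measure M C < measure M B"
    using atomless_real[OF assms B(1,3)] by blast
  show ?case
  proof (cases "measure M C \<le> measure M B / 2")
    case True
    then show ?thesis using B C by (intro bexI[of _ C]) auto
  next
    case False
    have "measure M (B - C) = measure M B - measure M C"
      using B C by (simp add: finite_measure_Diff)
    then show ?thesis using B C False by (intro bexI[of _ "B - C"]) auto
  qed
qed

lemma atomless_eps:
  assumes "prob_space M" "atomless M" "A \<in> sets M" "0 < measure M A" "0 < e"
  shows "\<exists>B\<in>sets M. B \<subseteq> A \<and> 0 < measure M B \<and> measure M B \<le> e"
proof -
  interpret prob_space M by fact
  obtain k where k: "(1/2::real)^k < e" using real_arch_pow_inv[of e "1/2"] assms(5) by auto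
  obtain B where B: "B\<in>sets M" "B \<subseteq> A" "0 < measure M B" "measure M B \<le> measure M A / 2^k"
    using atomless_small[OF assms(1,2,3,4)] by blast
  have "measure M A / 2^k \<le> 1 / 2^k"
    by (intro divide_right_mono) auto
  also have "\<dots> = (1/2)^k" by (simp add: power_one_over)
  finally show ?thesis using B k by (intro bexI[of _ B]) auto
qed


lemma sierpinski:
  assumes "prob_space M" "atomless M" "A \<in> sets M" "0 \<le> a" "a \<le> measure M A"
  shows "\<exists>B\<in>sets M. B \<subseteq> A \<and> measure M B = a"
proof -
  interpret prob_space M by fact
  define S where "S E r = {measure M C | C. C \<in> sets M \<and> C \<subseteq> E \<and> measure M C \<le> r}" for E r
  define pick where "pick E r = (SOME C. C \<in> sets M \<and> C \<subseteq> E \<and> measure M C \<le> r \<and> Sup (S E r) \<le> 2 * measure M C)" for E r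
  have Sne: "S E r \<noteq> {}" "bdd_above (S E r)" if "0 \<le> r" for E r
  proof -
    have "measure M {} \<in> S E r" unfolding S_def using that by (auto intro!: exI[of _ "{}"])
    then show "S E r \<noteq> {}" by auto
    show "bdd_above (S E r)" unfolding S_def by (intro bdd_aboveI[of _ r]) auto
  qed
  have pick_ex: "\<exists>C. C \<in> sets M \<and> C \<subseteq> E \<and> measure M C \<le> r \<and> Sup (S E r) \<le> 2 * measure M C"
    if r0: "0 \<le> r" for E r
  proof (cases "Sup (S E r) \<le> 0")
    case True
    then show ?thesis using that by (intro exI[of _ "{}"]) auto
  next
    case False
    then have "Sup (S E r) / 2 < Sup (S E r)" by auto
    then obtain x where "x \<in> S E r" "Sup (S E r) / 2 < x"
      using less_cSup_iff[OF Sne(1)[OF r0] Sne(2)[OF r0]] by blast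
    then show ?thesis unfolding S_def by force
  qed
  have pick: "pick E r \<in> sets M" "pick E r \<subseteq> E" "measure M (pick E r) \<le> r"
    "Sup (S E r) \<le> 2 * measure M (pick E r)" if "0 \<le> r" for E r
    using someI_ex[OF pick_ex[OF that, of E]] unfolding pick_def[symmetric] by auto
  define B where "B = rec_nat {} (\<lambda>k Bk. Bk \<union> pick (A - Bk) (a - measure M Bk))"
  have B0: "B 0 = {}" and BS: "B (Suc k) = B k \<union> pick (A - B k) (a - measure M (B k))" for k
    unfolding B_def by simp_all
  define C where "C k = pick (A - B k) (a - measure M (B k))" for k
  have inv: "B k \<in> sets M \<and> B k \<subseteq> A \<and> measure M (B k) \<le> a" for k
  proof (induction k)
    case 0
    then show ?case using B0 assms by auto
  next
    case (Suc k)
    have r: "0 \<le> a - measure M (B k)" using Suc by auto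
    have "measure M (B (Suc k)) = measure M (B k) + measure M (C k)"
      unfolding BS C_def[symmetric] using Suc pick[OF r, of "A - B k"] unfolding C_def
      by (intro finite_measure_Union) auto
    then show ?case unfolding BS C_def[symmetric] using Suc pick[OF r, of "A - B k"] unfolding C_def
      by auto
  qed
  have r: "0 \<le> a - measure M (B k)" for k using inv[of k] by auto
  have Cprop: "C k \<in> sets M" "C k \<subseteq> A - B k" "Sup (S (A - B k) (a - measure M (B k))) \<le> 2 * measure M (C k)" for k
    unfolding C_def using pick[OF r[of k]] by auto
  have mBS: "measure M (B (Suc k)) = measure M (B k) + measure M (C k)" for k
    unfolding BS C_def[symmetric] using inv[of k] Cprop[of k] by (intro finite_measure_Union) auto
  have inc: "incseq B" by (intro incseq_SucI) (auto simp: BS)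
  define Binf where "Binf = (\<Union>k. B k)"
  have Binf: "Binf \<in> sets M" "Binf \<subseteq> A" using inv unfolding Binf_def by auto
  have lim: "(\<lambda>k. measure M (B k)) \<longlonglongrightarrow> measure M Binf"
    unfolding Binf_def using inv inc by (intro finite_Lim_measure_incseq) auto
  have le: "measure M Binf \<le> a"
    using lim inv by (intro LIMSEQ_le_const2) auto
  have Bk_le: "measure M (B k) \<le> measure M Binf" for k
    using Binf inv[of k] unfolding Binf_def by (intro finite_measure_mono) auto
  show ?thesis
  proof (rule ccontr)
    assume "\<not> ?thesis"
    then have lt: "measure M Binf < a" using le Binf by auto
    have "measure M (A - Binf) = measure M A - measure M Binf"
      using Binf assms(3) by (simp add: finite_measure_Diff)
    then have pos: "0 < measure M (A - Binf)" using lt assms(5) by auto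
    obtain D where D: "D \<in> sets M" "D \<subseteq> A - Binf" "0 < measure M D" "measure M D \<le> a - measure M Binf"
      using atomless_eps[OF assms(1,2) _ pos, of "a - measure M Binf"] lt assms(3) Binf by auto
    have Dk: "measure M D \<le> 2 * measure M (C k)" for k
    proof -
      have "D \<subseteq> A - B k" using D(2) unfolding Binf_def by auto
      moreover have "measure M D \<le> a - measure M (B k)" using D(4) Bk_le[of k] by auto
      ultimately have "measure M D \<in> S (A - B k) (a - measure M (B k))"
        unfolding S_def using D(1) by auto
      then have "measure M D \<le> Sup (S (A - B k) (a - measure M (B k)))"
        using Sne(2)[OF r[of k]] by (intro cSup_upper)
      then show ?thesis using Cprop(3)[of k] by auto
    qed
    have grow: "real k * (measure M D / 2) \<le> measure M (B k)" for k
    proof (induction k)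
      case 0
      then show ?case by (simp add: B0)
    next
      case (Suc k)
      then show ?case using mBS[of k] Dk[of k] by (simp add: algebra_simps)
    qed
    obtain k where k: "a < real k * (measure M D / 2)"
      using reals_Archimedean3[of "measure M D / 2"] D(3) by auto
    show False using grow[of k] k inv[of k] by auto
  qed
qed


lemma split_sets:
  fixes n :: nat and p :: "nat \<Rightarrow> real"
  assumes "prob_space M" "atomless M"
  shows "(\<forall>i<n. 0 \<le> p i \<and> p i \<le> 1) \<Longrightarrow> (\<Sum>i<n. p i) \<in> \<int> \<Longrightarrow>
    \<exists>A. (\<forall>i<n. A i \<in> sets M \<and> measure M (A i) = p i) \<and>
        (\<exists>c. \<forall>\<omega>\<in>space M. (\<Sum>i<n. indicator (A i) \<omega> :: real) = c)"
proof (induction n arbitrary: p)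
  case 0
  then show ?case by auto
next
  case (Suc n)
  interpret prob_space M by fact
  show ?case
  proof (cases n)
    case 0
    then have p0: "p 0 \<in> \<int>" "0 \<le> p 0" "p 0 \<le> 1" using Suc.prems by auto
    then obtain z :: int where z: "p 0 = of_int z" by (auto elim: Ints_cases)
    then have "z = 0 \<or> z = 1" using p0 by auto
    then have "p 0 = 0 \<or> p 0 = 1" using z by auto
    then show ?thesis
    proof
      assume "p 0 = 0"
      then show ?thesis using 0 by (intro exI[of _ "\<lambda>_. {}"]) auto
    next
      assume h: "p 0 = 1"
      show ?thesis using 0 h
        by (intro exI[of _ "\<lambda>_. space M"]) (auto simp: prob_space)
    qed
  next
    case (Suc m)
    note n = Suc
    define x where "x = p m"
    define y where "y = p (Suc m)"
    have xy: "0 \<le> x" "x \<le> 1" "0 \<le> y" "y \<le> 1" using Suc.prems(1) n unfolding x_def y_def by auto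
    have sumS: "(\<Sum>i<Suc n. p i) = (\<Sum>i<m. p i) + x + y" using n unfolding x_def y_def by simp
    have sum_upd: "(\<Sum>i<m. f i) = (\<Sum>i<m. g i)" if "\<And>i. i < m \<Longrightarrow> f i = g i" for f g :: "nat \<Rightarrow> real"
      using that by (intro sum.cong) auto
    show ?thesis
    proof (cases "x + y \<le> 1")
      case True
      define p' where "p' = p(m := x + y)"
      have "(\<Sum>i<Suc m. p' i) = (\<Sum>i<m. p i) + x + y"
        unfolding p'_def by (simp add: sum_upd[of "p(m := x + y)" p])
      then have "(\<Sum>i<Suc m. p' i) \<in> \<int>" using Suc.prems(2) sumS by simp
      moreover have "\<forall>i<Suc m. 0 \<le> p' i \<and> p' i \<le> 1"
        using Suc.prems(1) n True xy unfolding p'_def by auto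
      ultimately obtain A' c where A': "\<forall>i<Suc m. A' i \<in> sets M \<and> measure M (A' i) = p' i"
        and c: "\<forall>\<omega>\<in>space M. (\<Sum>i<Suc m. indicator (A' i) \<omega> :: real) = c"
        using Suc.IH[of p'] n by blast
      have Am: "A' m \<in> sets M" "measure M (A' m) = x + y" using A' unfolding p'_def by auto
      obtain B1 where B1: "B1 \<in> sets M" "B1 \<subseteq> A' m" "measure M B1 = x"
        using sierpinski[OF assms Am(1), of x] Am xy by auto
      define A where "A = A'(m := B1, Suc m := A' m - B1)"
      have "measure M (A' m - B1) = y" using B1 Am by (simp add: finite_measure_Diff)
      then have "\<forall>i<Suc n. A i \<in> sets M \<and> measure M (A i) = p i"
        using A' B1 Am n unfolding A_def p'_def x_def y_def
        by (auto simp: less_Suc_eq)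
      moreover have "\<forall>\<omega>\<in>space M. (\<Sum>i<Suc n. indicator (A i) \<omega> :: real) = c"
      proof
        fix \<omega> assume w: "\<omega> \<in> space M"
        have "(\<Sum>i<Suc n. indicator (A i) \<omega> :: real)
            = (\<Sum>i<m. indicator (A' i) \<omega>) + (indicator B1 \<omega> + indicator (A' m - B1) \<omega>)"
          unfolding n A_def by (simp add: sum_upd[of "\<lambda>i. indicator ((A'(m := B1, Suc m := A' m - B1)) i) \<omega>" "\<lambda>i. indicator (A' i) \<omega>"])
        also have "indicator B1 \<omega> + indicator (A' m - B1) \<omega> = (indicator (A' m) \<omega> :: real)"
          using B1(2) by (auto simp: indicator_def)
        finally show "(\<Sum>i<Suc n. indicator (A i) \<omega> :: real) = c"
          using c w by simp
      qed
      ultimately show ?thesis by blast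
    next
      case False
      define p' where "p' = p(m := x + y - 1)"
      have "(\<Sum>i<Suc m. p' i) = (\<Sum>i<m. p i) + x + y - 1"
        unfolding p'_def by (simp add: sum_upd[of "p(m := x + y - 1)" p])
      then have "(\<Sum>i<Suc m. p' i) \<in> \<int>" using Suc.prems(2) sumS by (simp add: Ints_diff)
      moreover have "\<forall>i<Suc m. 0 \<le> p' i \<and> p' i \<le> 1"
        using Suc.prems(1) n False xy unfolding p'_def by auto
      ultimately obtain A' c where A': "\<forall>i<Suc m. A' i \<in> sets M \<and> measure M (A' i) = p' i"
        and c: "\<forall>\<omega>\<in>space M. (\<Sum>i<Suc m. indicator (A' i) \<omega> :: real) = c"
        using Suc.IH[of p'] n by blast
      have Am: "A' m \<in> sets M" "measure M (A' m) = x + y - 1" using A' unfolding p'_def by auto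
      have Cm: "space M - A' m \<in> sets M" "measure M (space M - A' m) = 2 - x - y"
        using Am by (auto simp: prob_compl)
      obtain S where S: "S \<in> sets M" "S \<subseteq> space M - A' m" "measure M S = 1 - y"
        using sierpinski[OF assms Cm(1), of "1 - y"] Cm xy by auto
      define A where "A = A'(m := A' m \<union> S, Suc m := space M - S)"
      have "measure M (A' m \<union> S) = x" using S Am by (subst finite_measure_Union) auto
      moreover have "measure M (space M - S) = y" using S by (simp add: prob_compl)
      ultimately have "\<forall>i<Suc n. A i \<in> sets M \<and> measure M (A i) = p i"
        using A' S Am n unfolding A_def p'_def x_def y_def
        by (auto simp: less_Suc_eq)
      moreover have "\<forall>\<omega>\<in>space M. (\<Sum>i<Suc n. indicator (A i) \<omega> :: real) = c + 1"
      proof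
        fix \<omega> assume w: "\<omega> \<in> space M"
        have "(\<Sum>i<Suc n. indicator (A i) \<omega> :: real)
            = (\<Sum>i<m. indicator (A' i) \<omega>) + (indicator (A' m \<union> S) \<omega> + indicator (space M - S) \<omega>)"
          unfolding n A_def by (simp add: sum_upd[of "\<lambda>i. indicator ((A'(m := A' m \<union> S, Suc m := space M - S)) i) \<omega>" "\<lambda>i. indicator (A' i) \<omega>"])
        also have "indicator (A' m \<union> S) \<omega> + indicator (space M - S) \<omega> = (indicator (A' m) \<omega> + 1 :: real)"
          using S(2) w by (auto simp: indicator_def)
        finally show "(\<Sum>i<Suc n. indicator (A i) \<omega> :: real) = c + 1"
          using c w by simp
      qed
      ultimately show ?thesis by blast
    qed
  qed
qed


lemma emeasure_bernoulli_measure: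
  assumes "0 \<le> p" "p \<le> 1"
  shows "emeasure (bernoulli_measure p) B =
    (if B \<in> sets borel then
     (if 1 \<in> B then ennreal p else 0) + (if 0 \<in> B then ennreal (1 - p) else 0) else 0)"
proof (cases "B \<in> sets borel")
  case True
  have "emeasure (bernoulli_measure p) B = emeasure (measure_pmf (bernoulli_pmf p)) ((\<lambda>b. of_bool b :: real) -` B)"
    unfolding bernoulli_measure_def using True by (subst emeasure_distr) auto
  also have "(\<lambda>b. of_bool b :: real) -` B = (if 1 \<in> B then {True} else {}) \<union> (if 0 \<in> B then {False} else {})"
    by (auto simp: of_bool_def split: if_splits)
  also have "emeasure (measure_pmf (bernoulli_pmf p)) \<dots> =
     (if 1 \<in> B then ennreal p else 0) + (if 0 \<in> B then ennreal (1 - p) else 0)"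
    using assms by (auto simp: emeasure_pmf_single measure_pmf.emeasure_space_1[simplified]
        UNIV_bool[symmetric] insert_commute ennreal_plus[symmetric])
  finally show ?thesis using True by simp
next
  case False
  then show ?thesis unfolding bernoulli_measure_def by (simp add: emeasure_notin_sets)
qed


lemma distr_indicator_bernoulli:
  assumes "prob_space M" "A \<in> sets M"
  shows "distr M borel (\<lambda>\<omega>. indicator A \<omega> :: real) = bernoulli_measure (measure M A)"
proof (rule measure_eqI)
  interpret prob_space M by fact
  show "sets (distr M borel (\<lambda>\<omega>. indicator A \<omega> :: real)) = sets (bernoulli_measure (measure M A))"
    by (simp add: bernoulli_measure_def)
  fix B assume "B \<in> sets (distr M borel (\<lambda>\<omega>. indicator A \<omega> :: real))"
  then have B: "B \<in> sets borel" by simp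
  have "emeasure (distr M borel (\<lambda>\<omega>. indicator A \<omega> :: real)) B
      = emeasure M ((\<lambda>\<omega>. indicator A \<omega> :: real) -` B \<inter> space M)"
    using B assms(2) by (subst emeasure_distr) auto
  also have "(\<lambda>\<omega>. indicator A \<omega> :: real) -` B \<inter> space M =
     (if 1 \<in> B then A else {}) \<union> (if 0 \<in> B then space M - A else {})"
    using sets.sets_into_space[OF assms(2)] by (auto simp: indicator_def of_bool_def split: if_splits)
  also have "emeasure M \<dots> = (if 1 \<in> B then ennreal (measure M A) else 0) +
       (if 0 \<in> B then ennreal (1 - measure M A) else 0)"
  proof -
    have e1: "emeasure M A = ennreal (measure M A)" using assms(2) by (simp add: emeasure_eq_measure)
    have e2: "emeasure M (space M - A) = ennreal (1 - measure M A)"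
      using assms(2) by (simp add: emeasure_eq_measure prob_compl)
    have e3: "emeasure M (A \<union> (space M - A)) = ennreal (measure M A) + ennreal (1 - measure M A)"
      using assms(2) by (subst plus_emeasure[symmetric]) (auto simp: e1 e2)
    show ?thesis
      by (cases "1 \<in> B"; cases "0 \<in> B") (simp_all only: if_True if_False e1 e2 e3 Un_empty_left Un_empty_right emeasure_empty add_0 add_0_right)
  qed
  also have "\<dots> = emeasure (bernoulli_measure (measure M A)) B"
    using B by (subst emeasure_bernoulli_measure) auto
  finally show "emeasure (distr M borel (\<lambda>\<omega>. indicator A \<omega> :: real)) B = emeasure (bernoulli_measure (measure M A)) B" .
qed

lemma bernoulli_integral:
  assumes "0 \<le> p" "p \<le> 1"
  shows "integrable (bernoulli_measure p) (\<lambda>x. x)" "integral\<^sup>L (bernoulli_measure p) (\<lambda>x. x) = p"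
proof -
  have "integrable (measure_pmf (bernoulli_pmf p)) (\<lambda>b. of_bool b :: real)"
    by (rule integrable_measure_pmf_finite) simp
  then show "integrable (bernoulli_measure p) (\<lambda>x. x)"
    unfolding bernoulli_measure_def by (subst integrable_distr_eq) auto
  have "integral\<^sup>L (bernoulli_measure p) (\<lambda>x. x) = integral\<^sup>L (measure_pmf (bernoulli_pmf p)) (\<lambda>b. of_bool b :: real)"
    unfolding bernoulli_measure_def by (subst integral_distr) auto
  also have "\<dots> = (\<Sum>b\<in>UNIV. of_bool b * pmf (bernoulli_pmf p) b)"
    by (rule integral_measure_pmf_real) auto
  also have "\<dots> = p" using assms by (simp add: UNIV_bool)
  finally show "integral\<^sup>L (bernoulli_measure p) (\<lambda>x. x) = p" .
qed


theorem proposition21: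
  fixes M :: "'a measure" and p :: "nat \<Rightarrow> real" and n :: nat
  assumes "prob_space M" and "atomless M"
    and "\<forall>i<n. 0 \<le> p i \<and> p i \<le> 1"
  shows "jointly_mixable M (\<lambda>i. bernoulli_measure (p i)) n \<longleftrightarrow> (\<Sum>i<n. p i) \<in> \<int>"
proof
  interpret prob_space M by fact
  assume "jointly_mixable M (\<lambda>i. bernoulli_measure (p i)) n"
  then obtain X :: "nat \<Rightarrow> 'a \<Rightarrow> real" and c where
    X: "\<And>i. i < n \<Longrightarrow> X i \<in> borel_measurable M"
       "\<And>i. i < n \<Longrightarrow> distr M borel (X i) = bernoulli_measure (p i)"
    and c: "AE \<omega> in M. (\<Sum>i<n. X i \<omega>) = c"
    unfolding jointly_mixable_def by blast
  have p01: "0 \<le> p i" "p i \<le> 1" if "i < n" for i using assms(3) that by auto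
  have AE01: "AE \<omega> in M. X i \<omega> \<in> {0,1}" if i: "i < n" for i
  proof -
    have N: "X i -` (- {0,1}) \<inter> space M \<in> sets M" using X(1)[OF i] by measurable
    have "emeasure M (X i -` (- {0,1}) \<inter> space M) = emeasure (distr M borel (X i)) (- {0,1})"
      using X(1)[OF i] by (subst emeasure_distr) auto
    also have "\<dots> = 0" unfolding X(2)[OF i] using p01[OF i]
      by (subst emeasure_bernoulli_measure) auto
    finally show ?thesis
      by (subst AE_iff_measurable[OF N]) auto
  qed
  have int: "integrable M (X i)" "integral\<^sup>L M (X i) = p i" if i: "i < n" for i
  proof -
    have "integrable (distr M borel (X i)) (\<lambda>x. x)"
      unfolding X(2)[OF i] using bernoulli_integral p01[OF i] by auto
    then show "integrable M (X i)" using X(1)[OF i] by (subst (asm) integrable_distr_eq) auto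
    have "integral\<^sup>L M (X i) = integral\<^sup>L (distr M borel (X i)) (\<lambda>x. x)"
      using X(1)[OF i] by (subst integral_distr) auto
    also have "\<dots> = p i" unfolding X(2)[OF i] using bernoulli_integral p01[OF i] by auto
    finally show "integral\<^sup>L M (X i) = p i" .
  qed
  have "integral\<^sup>L M (\<lambda>\<omega>. \<Sum>i<n. X i \<omega>) = (\<Sum>i<n. integral\<^sup>L M (X i))"
    using int(1) Bochner_Integration.integral_sum[where I="{..<n}" and M=M and f=X] by auto
  also have "\<dots> = (\<Sum>i<n. p i)" using int by simp
  finally have s1: "integral\<^sup>L M (\<lambda>\<omega>. \<Sum>i<n. X i \<omega>) = (\<Sum>i<n. p i)" .
  have "integral\<^sup>L M (\<lambda>\<omega>. \<Sum>i<n. X i \<omega>) = integral\<^sup>L M (\<lambda>_. c)"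
    using c X(1) by (intro integral_cong_AE) auto
  also have "\<dots> = c" by (simp add: prob_space)
  finally have s2: "(\<Sum>i<n. p i) = c" using s1 by simp
  have "AE \<omega> in M. (\<Sum>i<n. X i \<omega>) = c \<and> (\<forall>i\<in>{..<n}. X i \<omega> \<in> {0,1})"
    using c AE_finite_allI[of "{..<n}" "\<lambda>i \<omega>. X i \<omega> \<in> {0,1}" M] AE01 by auto
  then have "AE \<omega> in M. c \<in> \<int>"
  proof (rule eventually_mono)
    fix \<omega> assume h: "(\<Sum>i<n. X i \<omega>) = c \<and> (\<forall>i\<in>{..<n}. X i \<omega> \<in> {0,1})"
    have "(\<Sum>i<n. X i \<omega>) \<in> \<int>" using h by (intro Ints_sum) force
    then show "c \<in> \<int>" using h by simp
  qed
  then have "c \<in> \<int>" using AE_False by (cases "c \<in> \<int>") auto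
  then show "(\<Sum>i<n. p i) \<in> \<int>" using s2 by simp
next
  interpret prob_space M by fact
  assume "(\<Sum>i<n. p i) \<in> \<int>"
  then obtain A c where A: "\<forall>i<n. A i \<in> sets M \<and> measure M (A i) = p i"
    and c: "\<forall>\<omega>\<in>space M. (\<Sum>i<n. indicator (A i) \<omega> :: real) = c"
    using split_sets[OF assms(1,2), of n p] assms(3) by blast
  show "jointly_mixable M (\<lambda>i. bernoulli_measure (p i)) n"
    unfolding jointly_mixable_def
  proof (intro exI[of _ "\<lambda>i \<omega>. indicator (A i) \<omega>"] conjI allI impI)
    fix i assume i: "i < n"
    show "(\<lambda>\<omega>. indicator (A i) \<omega> :: real) \<in> borel_measurable M" using A i by (intro borel_measurable_indicator) auto
    show "distr M borel (\<lambda>\<omega>. indicator (A i) \<omega> :: real) = bernoulli_measure (p i)"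
      using distr_indicator_bernoulli[OF assms(1), of "A i"] A i by auto
  next
    show "\<exists>c. AE \<omega> in M. (\<Sum>i<n. indicator (A i) \<omega> :: real) = c"
      using c by (intro exI[of _ c] AE_I2) auto
  qed
qed

end
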